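(* Consider full-batch Noisy-SGD ($\mathcal{B}_t=\mathcal{B}_t'=[n]$) on adjacent datasets $\mathcal{D},\mathcal{D}'$, with iterates $W_t,W_t'$ and $W_0=W_0'$. Suppose the gradient update maps $\psi_t(x)=x-\frac{\eta}{n}\sum_{i\in[n]}\Pi_{B_K}[\nabla\ell_i(x)]$ and $\psi_t'(x)=x-\frac{\eta}{n}\sum_{i\in[n]}\Pi_{B_K}[\nabla\ell_i'(x)]$ are $c$-Lipschitz for some $c\ge0$. Then for all $t\ge0$, $$W_\infty(W_t,W_t')\le\min(D_t,D),\qquad D_t=\min\big(cD_{t-1}+2\eta K/n,\ D_{t-1}+2\eta K\big),\quad D_0=0.$$
   Context: Setting (Noisy-SGD). Let $\mathcal{K}\subset\mathbb{R}^d$ be a nonempty closed convex set of diameter $D$, $\Pi_{\mathcal{K}}$ the Euclidean projection. Let $\ell(\cdot;d)$, $d\in\mathcal{X}$, be differentiable losses on $\mathcal{K}$; for $\mathcal{D}=(d_1,\dots,d_n)$ write $\ell_i=\ell(\cdot;d_i)$, and $\ell_i'=\ell(\cdot;d_i')$ for $\mathcal{D}'$. $\Pi_{B_K}(v)=v\min(1,K/\|v\|)$. Noisy-SGD: $W_{t+1}=\Pi_{\mathcal{K}}\big[W_t-\eta\frac1b\sum_{i\in\mathcal{B}_t}\Pi_{B_K}[\nabla\ell_i(W_t)]+G_t\big]$, $G_t$ i.i.d. $N(0,\sigma^2I_d)$ independent of everything else; $W_t'$ is defined analogously on $\mathcal{D}'$ with its own noise $G_t'$ of the same law. Adjacent datasets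 differ in exactly one index. The infinite Wasserstein distance between laws $\mu,\nu$ on $\mathbb{R}^d$ is $W_\infty(\mu,\nu)=\inf_{\gamma\in\Gamma(\mu,\nu)}\operatorname{ess\,sup}_{(X,Y)\sim\gamma}\|X-Y\|$, $\Gamma(\mu,\nu)$ the set of couplings; $W_\infty(W_t,W_t')$ refers to the laws of $W_t,W_t'$. *)

theory Defs
  imports "HOL-Analysis.Analysis" "HOL-Probability.Probability"
begin

(* Projection onto the ball of radius K: v * min(1, K/|v|) (0 is mapped to 0). *)
definition clipK :: "real \<Rightarrow> 'a::real_normed_vector \<Rightarrow> 'a" where
  "clipK K v = min 1 (K / norm v) *\<^sub>R v"

definition gd_map :: "real \<Rightarrow> real \<Rightarrow> nat \<Rightarrow> (nat \<Rightarrow> 'a \<Rightarrow> 'a) \<Rightarrow> 'a \<Rightarrow> 'a::real_normed_vector" where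
  "gd_map \<eta> K n g x = x - (\<eta> / real n) *\<^sub>R (\<Sum>i<n. clipK K (g i x))"

definition gauss :: "real \<Rightarrow> 'a::euclidean_space measure" where
  "gauss \<sigma> = (if \<sigma> = 0 then return borel 0 else
     density lborel (\<lambda>x. ennreal ((2 * pi * \<sigma>\<^sup>2) powr (- real DIM('a) / 2)
                                  * exp (- (norm x)\<^sup>2 / (2 * \<sigma>\<^sup>2)))))"

fun nsgd :: "'a::euclidean_space set \<Rightarrow> ('a \<Rightarrow> 'a) \<Rightarrow> ('w \<Rightarrow> 'a) \<Rightarrow> (nat \<Rightarrow> 'w \<Rightarrow> 'a) \<Rightarrow> nat \<Rightarrow> 'w \<Rightarrow> 'a" where
  "nsgd C \<psi> W0 G 0 \<omega> = W0 \<omega>"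
| "nsgd C \<psi> W0 G (Suc t) \<omega> = closest_point C (\<psi> (nsgd C \<psi> W0 G t \<omega>) + G t \<omega>)"

definition couplings :: "'a::euclidean_space measure \<Rightarrow> 'a measure \<Rightarrow> ('a \<times> 'a) measure set" where
  "couplings \<mu> \<nu> = {\<gamma>. prob_space \<gamma> \<and> sets \<gamma> = sets (borel \<Otimes>\<^sub>M borel)
       \<and> distr \<gamma> borel fst = \<mu> \<and> distr \<gamma> borel snd = \<nu>}"

definition W_inf :: "'a::euclidean_space measure \<Rightarrow> 'a measure \<Rightarrow> ereal" where
  "W_inf \<mu> \<nu> = (INF \<gamma>\<in>couplings \<mu> \<nu>. esssup \<gamma> (\<lambda>(x, y). ereal (norm (x - y))))"

fun Dseq :: "real \<Rightarrow> real \<Rightarrow> real \<Rightarrow> nat \<Rightarrow> nat \<Rightarrow> real" where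
  "Dseq c \<eta> K n 0 = 0"
| "Dseq c \<eta> K n (Suc t) = min (c * Dseq c \<eta> K n t + 2 * \<eta> * K / real n) (Dseq c \<eta> K n t + 2 * \<eta> * K)"

end

theory Submission
  imports Defs
begin

fun Fv :: "'a::euclidean_space set \<Rightarrow> ('a \<Rightarrow> 'a) \<Rightarrow> nat \<Rightarrow> (nat option \<Rightarrow> 'a) \<Rightarrow> 'a" where
  "Fv C \<psi> 0 v = v None"
| "Fv C \<psi> (Suc t) v = closest_point C (\<psi> (closest_point C (Fv C \<psi> t v)) + v (Some t))"

lemma Fv_meas:
  fixes C :: "'a::euclidean_space set"
  assumes C: "C \<noteq> {}" "closed C" "convex C" and psi: "continuous_on C \<psi>"
    and I: "None \<in> I" "\<And>k. k < t \<Longrightarrow> Some k \<in> I"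
  shows "Fv C \<psi> t \<in> borel_measurable (PiM I (\<lambda>_. borel))"
  using I(2)
proof (induction t)
  case 0
  then show ?case using I(1) by (simp add: measurable_component_singleton)
next
  case (Suc t)
  have cP: "continuous_on UNIV (closest_point C)"
    by (rule continuous_on_closest_point[OF C(3,2,1)])
  have c1: "continuous_on UNIV (\<lambda>x. \<psi> (closest_point C x))"
    by (rule continuous_on_compose2[OF psi cP]) (auto simp: closest_point_in_set C)
  have m1: "(\<lambda>x. \<psi> (closest_point C x)) \<in> borel_measurable borel"
    by (rule borel_measurable_continuous_onI[OF c1])
  have mP: "closest_point C \<in> borel_measurable borel"
    by (rule borel_measurable_continuous_onI[OF cP])
  have IH: "Fv C \<psi> t \<in> borel_measurable (PiM I (\<lambda>_. borel))" using Suc by auto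
  have a: "(\<lambda>v. \<psi> (closest_point C (Fv C \<psi> t v))) \<in> borel_measurable (PiM I (\<lambda>_. borel))"
    using measurable_compose[OF IH m1] by (simp add: o_def)
  have b: "(\<lambda>v. v (Some t)) \<in> borel_measurable (PiM I (\<lambda>_. borel))"
    using Suc.prems by (auto intro: measurable_component_singleton)
  have "(\<lambda>v. \<psi> (closest_point C (Fv C \<psi> t v)) + v (Some t)) \<in> borel_measurable (PiM I (\<lambda>_. borel))"
    using a b by (rule borel_measurable_add)
  from measurable_compose[OF this mP] show ?case by (simp add: o_def)
qed

lemma Fv_agree:
  fixes C :: "'a::euclidean_space set"
  assumes C: "C \<noteq> {}" "closed C" and W0C: "W0 \<omega> \<in> C"
  shows "(\<forall>v. v None = W0 \<omega> \<longrightarrow> (\<forall>k<t. v (Some k) = G k \<omega>) \<longrightarrow> Fv C \<psi> t v = nsgd C \<psi> W0 G t \<omega>)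
     \<and> nsgd C \<psi> W0 G t \<omega> \<in> C"
proof (induction t)
  case 0
  then show ?case using W0C by auto
next
  case (Suc t)
  then show ?case using C by (auto simp: closest_point_self closest_point_in_set)
qed

lemma nsgd_law:
  fixes C :: "'a::euclidean_space set" and W0 :: "'w \<Rightarrow> 'a" and G :: "nat \<Rightarrow> 'w \<Rightarrow> 'a"
  assumes C: "C \<noteq> {}" "closed C" "convex C" and psi: "continuous_on C \<psi>"
    and P: "prob_space M"
    and W0: "W0 \<in> borel_measurable M" "\<And>\<omega>. \<omega> \<in> space M \<Longrightarrow> W0 \<omega> \<in> C"
    and G: "\<And>t. G t \<in> borel_measurable M" "\<And>t. distr M borel (G t) = mu"
    and indep: "prob_space.indep_vars M (\<lambda>_. borel) (\<lambda>i. case i of None \<Rightarrow> W0 | Some t \<Rightarrow> G t) UNIV"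
  shows "nsgd C \<psi> W0 G t \<in> borel_measurable M \<and>
    distr M borel (nsgd C \<psi> W0 G t) =
    distr (PiM (insert None (Some ` {..<t})) (\<lambda>i. case i of None \<Rightarrow> distr M borel W0 | Some _ \<Rightarrow> mu)) borel (Fv C \<psi> t)"
proof -
  interpret prob_space M by (rule P)
  define I where "I = insert None (Some ` {..<t})"
  define X where "X = (\<lambda>i. case i of None \<Rightarrow> W0 | Some t \<Rightarrow> G t)"
  have Xm: "\<And>i. X i \<in> borel_measurable M" using W0 G by (auto simp: X_def split: option.splits)
  define J where "J = (\<lambda>\<omega>. \<lambda>i\<in>I. X i \<omega>)"
  have Jm: "J \<in> measurable M (PiM I (\<lambda>_. borel))"
    unfolding J_def by (rule measurable_restrict) (use Xm in auto)
  have Fm: "Fv C \<psi> t \<in> borel_measurable (PiM I (\<lambda>_. borel))"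
    by (rule Fv_meas[OF C psi]) (auto simp: I_def)
  have agree: "\<And>\<omega>. \<omega> \<in> space M \<Longrightarrow> Fv C \<psi> t (J \<omega>) = nsgd C \<psi> W0 G t \<omega>"
  proof -
    fix \<omega> assume "\<omega> \<in> space M"
    from Fv_agree[of C W0 \<omega> t G \<psi>, OF C(1,2) W0(2)[OF this]]
    show "Fv C \<psi> t (J \<omega>) = nsgd C \<psi> W0 G t \<omega>"
      by (auto simp: J_def I_def X_def)
  qed
  have meas: "nsgd C \<psi> W0 G t \<in> borel_measurable M"
  proof -
    have "(\<lambda>\<omega>. Fv C \<psi> t (J \<omega>)) \<in> borel_measurable M"
      using measurable_compose[OF Jm Fm] by (simp add: o_def)
    then show ?thesis
      by (rule measurable_cong[THEN iffD1, rotated]) (simp add: agree)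
  qed
  have ind: "indep_vars (\<lambda>_. borel) X I"
    using indep_vars_subset[OF indep] by (simp add: X_def)
  have "distr M (PiM I (\<lambda>_. borel)) J = PiM I (\<lambda>i. distr M borel (X i))"
    using ind indep_vars_iff_distr_eq_PiM[where I=I and M'="\<lambda>_. borel" and X=X] Xm by (auto simp: J_def I_def)
  also have "\<dots> = PiM I (\<lambda>i. case i of None \<Rightarrow> distr M borel W0 | Some _ \<Rightarrow> mu)"
    by (rule PiM_cong) (auto simp: X_def G split: option.splits)
  finally have eq: "distr M (PiM I (\<lambda>_. borel)) J = PiM I (\<lambda>i. case i of None \<Rightarrow> distr M borel W0 | Some _ \<Rightarrow> mu)" .
  have "distr M borel (nsgd C \<psi> W0 G t) = distr M borel (\<lambda>\<omega>. Fv C \<psi> t (J \<omega>))"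
    by (rule distr_cong) (simp_all add: agree)
  also have "\<dots> = distr (distr M (PiM I (\<lambda>_. borel)) J) borel (Fv C \<psi> t)"
    by (rule distr_distr[OF Fm Jm, symmetric, unfolded o_def])
  finally show ?thesis using meas eq by (simp add: I_def)
qed

lemma clip_norm:
  fixes v :: "'a::real_normed_vector"
  assumes "K > 0" shows "norm (clipK K v) \<le> K"
proof (cases "v = 0")
  case True then show ?thesis using assms by (simp add: clipK_def)
next
  case False
  have "norm (clipK K v) = min 1 (K / norm v) * norm v"
    using assms by (simp add: clipK_def)
  also have "\<dots> \<le> (K / norm v) * norm v" by (intro mult_right_mono) auto
  also have "\<dots> = K" using False by simp
  finally show ?thesis .
qed

lemma sum_clip_norm:
  fixes g :: "nat \<Rightarrow> 'a::real_normed_vector"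
  assumes "K > 0" shows "norm (\<Sum>i<n. clipK K (g i)) \<le> real n * K"
proof -
  have "norm (\<Sum>i<n. clipK K (g i)) \<le> (\<Sum>i<n. norm (clipK K (g i)))" by (rule norm_sum)
  also have "\<dots> \<le> (\<Sum>i<n. K)" by (rule sum_mono) (rule clip_norm[OF assms])
  finally show ?thesis by simp
qed

lemma step_bound:
  fixes g g' :: "nat \<Rightarrow> 'a \<Rightarrow> 'a::real_normed_vector"
  assumes adj: "\<exists>j<n. \<forall>i<n. i \<noteq> j \<longrightarrow> g i = g' i"
    and n: "n \<ge> 1" and eta: "\<eta> \<ge> 0" and Kpos: "K > 0"
    and lip: "dist (gd_map \<eta> K n g x) (gd_map \<eta> K n g y) \<le> c * dist x y"
  shows "norm (gd_map \<eta> K n g x - gd_map \<eta> K n g' y)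
     \<le> min (c * norm (x - y) + 2 * \<eta> * K / real n) (norm (x - y) + 2 * \<eta> * K)"
proof -
  obtain j where j: "j < n" "\<And>i. i < n \<Longrightarrow> i \<noteq> j \<Longrightarrow> g i = g' i" using adj by blast
  define S :: "(nat \<Rightarrow> 'a \<Rightarrow> 'a) \<Rightarrow> 'a \<Rightarrow> 'a" where "S = (\<lambda>h z. \<Sum>i<n. clipK K (h i z))"
  have nr: "real n > 0" using n by simp
  have gm: "\<And>h z. gd_map \<eta> K n h z = z - (\<eta> / real n) *\<^sub>R S h z"
    by (simp add: gd_map_def S_def)
  have rem: "\<And>h z. S h z = clipK K (h j z) + (\<Sum>i\<in>{..<n}-{j}. clipK K (h i z))"
    unfolding S_def using j(1) by (simp add: sum.remove)
  have same: "(\<Sum>i\<in>{..<n}-{j}. clipK K (g i y)) = (\<Sum>i\<in>{..<n}-{j}. clipK K (g' i y))"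
    by (rule sum.cong) (auto simp: j(2))
  have d1: "S g' y - S g y = clipK K (g' j y) - clipK K (g j y)"
    using rem[of g' y] rem[of g y] same by simp
  have d1n: "norm (S g' y - S g y) \<le> 2 * K"
    unfolding d1 using norm_triangle_ineq4[of "clipK K (g' j y)" "clipK K (g j y)"]
      clip_norm[OF Kpos, of "g' j y"] clip_norm[OF Kpos, of "g j y"] by linarith
  have e1: "gd_map \<eta> K n g x - gd_map \<eta> K n g' y
      = (gd_map \<eta> K n g x - gd_map \<eta> K n g y) + (\<eta> / real n) *\<^sub>R (S g' y - S g y)"
    by (simp add: gm algebra_simps)
  have b1: "norm (gd_map \<eta> K n g x - gd_map \<eta> K n g' y) \<le> c * norm (x - y) + 2 * \<eta> * K / real n"
  proof -
    have "norm ((\<eta> / real n) *\<^sub>R (S g' y - S g y)) = (\<eta> / real n) * norm (S g' y - S g y)"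
      using eta nr by simp
    also have "\<dots> \<le> (\<eta> / real n) * (2 * K)"
      by (rule mult_left_mono[OF d1n]) (use eta nr in simp)
    finally have "norm ((\<eta> / real n) *\<^sub>R (S g' y - S g y)) \<le> 2 * \<eta> * K / real n" by (simp add: mult_ac)
    moreover have "norm (gd_map \<eta> K n g x - gd_map \<eta> K n g y) \<le> c * norm (x - y)"
      using lip by (simp add: dist_norm)
    ultimately show ?thesis unfolding e1 using norm_triangle_ineq by (smt (verit))
  qed
  have e2: "gd_map \<eta> K n g x - gd_map \<eta> K n g' y = (x - y) - (\<eta> / real n) *\<^sub>R (S g x - S g' y)"
    by (simp add: gm algebra_simps)
  have b2: "norm (gd_map \<eta> K n g x - gd_map \<eta> K n g' y) \<le> norm (x - y) + 2 * \<eta> * K"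
  proof -
    have "norm (S g x - S g' y) \<le> real n * K + real n * K"
      using norm_triangle_ineq4[of "S g x" "S g' y"] sum_clip_norm[OF Kpos, where n=n and g="\<lambda>i. g i x"]
        sum_clip_norm[OF Kpos, where n=n and g="\<lambda>i. g' i y"] unfolding S_def by linarith
    then have "(\<eta> / real n) * norm (S g x - S g' y) \<le> (\<eta> / real n) * (2 * real n * K)"
      by (intro mult_left_mono) (use eta nr in \<open>auto simp: mult_ac\<close>)
    also have "\<dots> = 2 * \<eta> * K" using nr by (simp add: field_simps)
    finally have "norm ((\<eta> / real n) *\<^sub>R (S g x - S g' y)) \<le> 2 * \<eta> * K" using eta nr by simp
    then show ?thesis unfolding e2 using norm_triangle_ineq4 by (smt (verit))
  qed
  show ?thesis using b1 b2 by simp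
qed

lemma Dseq_ge0: "c \<ge> 0 \<Longrightarrow> \<eta> \<ge> 0 \<Longrightarrow> K \<ge> 0 \<Longrightarrow> Dseq c \<eta> K n t \<ge> 0"
  by (induction t) auto

lemma pointwise:
  fixes C :: "'a::euclidean_space set" and g g' :: "nat \<Rightarrow> 'a \<Rightarrow> 'a"
  assumes C: "C \<noteq> {}" "closed C" "convex C"
    and adj: "\<exists>j<n. \<forall>i<n. i \<noteq> j \<longrightarrow> g i = g' i"
    and n: "n \<ge> 1" and eta: "\<eta> \<ge> 0" and Kpos: "K > 0" and c: "c \<ge> 0"
    and lip: "\<And>x y. x \<in> C \<Longrightarrow> y \<in> C \<Longrightarrow>
               dist (gd_map \<eta> K n g x) (gd_map \<eta> K n g y) \<le> c * dist x y"
    and W0C: "W0 \<omega> \<in> C"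
  shows "norm (nsgd C (gd_map \<eta> K n g) W0 G t \<omega> - nsgd C (gd_map \<eta> K n g') W0 G t \<omega>) \<le> Dseq c \<eta> K n t
    \<and> nsgd C (gd_map \<eta> K n g) W0 G t \<omega> \<in> C \<and> nsgd C (gd_map \<eta> K n g') W0 G t \<omega> \<in> C"
proof (induction t)
  case 0
  then show ?case using W0C by simp
next
  case (Suc t)
  let ?X = "nsgd C (gd_map \<eta> K n g) W0 G t \<omega>"
  let ?Y = "nsgd C (gd_map \<eta> K n g') W0 G t \<omega>"
  let ?D = "Dseq c \<eta> K n t"
  have d: "norm (?X - ?Y) \<le> ?D" and XC: "?X \<in> C" and YC: "?Y \<in> C" using Suc by auto
  have sb: "norm (gd_map \<eta> K n g ?X - gd_map \<eta> K n g' ?Y)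
     \<le> min (c * norm (?X - ?Y) + 2 * \<eta> * K / real n) (norm (?X - ?Y) + 2 * \<eta> * K)"
    by (rule step_bound[OF adj n eta Kpos lip[OF XC YC]])
  have "c * norm (?X - ?Y) \<le> c * ?D" using d c by (simp add: mult_left_mono)
  with sb d have sb2: "norm (gd_map \<eta> K n g ?X - gd_map \<eta> K n g' ?Y) \<le> Dseq c \<eta> K n (Suc t)"
    by auto
  have "dist (closest_point C (gd_map \<eta> K n g ?X + G t \<omega>)) (closest_point C (gd_map \<eta> K n g' ?Y + G t \<omega>))
     \<le> dist (gd_map \<eta> K n g ?X + G t \<omega>) (gd_map \<eta> K n g' ?Y + G t \<omega>)"
    by (rule closest_point_lipschitz[OF C(3,2,1)])
  also have "\<dots> = norm (gd_map \<eta> K n g ?X - gd_map \<eta> K n g' ?Y)" by (simp add: dist_norm)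
  finally show ?case using sb2 C by (simp add: dist_norm closest_point_in_set)
qed

theorem mainTheorem7:
  fixes C :: "'a::euclidean_space set"
    and loss :: "'x \<Rightarrow> 'a \<Rightarrow> real" and grad :: "'x \<Rightarrow> 'a \<Rightarrow> 'a"
    and dat dat' :: "nat \<Rightarrow> 'x"
    and n :: nat and \<eta> K \<sigma> c :: real
    and M :: "'w measure" and W0 :: "'w \<Rightarrow> 'a" and G G' :: "nat \<Rightarrow> 'w \<Rightarrow> 'a"
  assumes C: "C \<noteq> {}" "closed C" "convex C" "bounded C"
    and diff: "\<And>z x. x \<in> C \<Longrightarrow> (loss z has_derivative (\<lambda>h. grad z x \<bullet> h)) (at x within C)"
    and adj: "\<exists>j<n. \<forall>i<n. i \<noteq> j \<longrightarrow> dat i = dat' i"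
    and n: "n \<ge> 1" and eta: "\<eta> \<ge> 0" and Kpos: "K > 0" and sig: "\<sigma> \<ge> 0" and c: "c \<ge> 0"
    and lip: "\<And>x y. x \<in> C \<Longrightarrow> y \<in> C \<Longrightarrow>
               dist (gd_map \<eta> K n (\<lambda>i. grad (dat i)) x) (gd_map \<eta> K n (\<lambda>i. grad (dat i)) y) \<le> c * dist x y"
    and lip': "\<And>x y. x \<in> C \<Longrightarrow> y \<in> C \<Longrightarrow>
               dist (gd_map \<eta> K n (\<lambda>i. grad (dat' i)) x) (gd_map \<eta> K n (\<lambda>i. grad (dat' i)) y) \<le> c * dist x y"
    and P: "prob_space M"
    and W0: "W0 \<in> borel_measurable M" "\<And>\<omega>. \<omega> \<in> space M \<Longrightarrow> W0 \<omega> \<in> C"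
    and G: "\<And>t. G t \<in> borel_measurable M" "\<And>t. distr M borel (G t) = gauss \<sigma>"
    and G': "\<And>t. G' t \<in> borel_measurable M" "\<And>t. distr M borel (G' t) = gauss \<sigma>"
    and indep: "prob_space.indep_vars M (\<lambda>_. borel) (\<lambda>i. case i of None \<Rightarrow> W0 | Some t \<Rightarrow> G t) UNIV"
    and indep': "prob_space.indep_vars M (\<lambda>_. borel) (\<lambda>i. case i of None \<Rightarrow> W0 | Some t \<Rightarrow> G' t) UNIV"
  shows "W_inf (distr M borel (nsgd C (gd_map \<eta> K n (\<lambda>i. grad (dat i))) W0 G t))
               (distr M borel (nsgd C (gd_map \<eta> K n (\<lambda>i. grad (dat' i))) W0 G' t))
         \<le> ereal (min (Dseq c \<eta> K n t) (diameter C))"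
proof -
  interpret prob_space M by (rule P)
  define \<psi> where "\<psi> = gd_map \<eta> K n (\<lambda>i. grad (dat i))"
  define \<psi>' where "\<psi>' = gd_map \<eta> K n (\<lambda>i. grad (dat' i))"
  have cpsi: "continuous_on C \<psi>"
    by (rule lipschitz_on_continuous_on, rule lipschitz_onI) (use lip c in \<open>auto simp: \<psi>_def\<close>)
  have cpsi': "continuous_on C \<psi>'"
    by (rule lipschitz_on_continuous_on, rule lipschitz_onI) (use lip' c in \<open>auto simp: \<psi>'_def\<close>)
  define X where "X = nsgd C \<psi> W0 G t"
  define Y where "Y = nsgd C \<psi>' W0 G t"
  define Y' where "Y' = nsgd C \<psi>' W0 G' t"
  have LX: "X \<in> borel_measurable M"
    using nsgd_law[OF C(1-3) cpsi P W0 G indep, of t] by (simp add: X_def)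
  have LY: "Y \<in> borel_measurable M \<and> distr M borel Y =
    distr (PiM (insert None (Some ` {..<t})) (\<lambda>i. case i of None \<Rightarrow> distr M borel W0 | Some _ \<Rightarrow> gauss \<sigma>)) borel (Fv C \<psi>' t)"
    using nsgd_law[OF C(1-3) cpsi' P W0 G indep, of t] by (simp add: Y_def)
  have LY': "distr M borel Y' =
    distr (PiM (insert None (Some ` {..<t})) (\<lambda>i. case i of None \<Rightarrow> distr M borel W0 | Some _ \<Rightarrow> gauss \<sigma>)) borel (Fv C \<psi>' t)"
    using nsgd_law[OF C(1-3) cpsi' P W0 G' indep', of t] by (simp add: Y'_def)
  have YY': "distr M borel Y = distr M borel Y'" using LY LY' by simp
  have pm: "(\<lambda>\<omega>. (X \<omega>, Y \<omega>)) \<in> measurable M (borel :: ('a \<times> 'a) measure)"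
    using measurable_Pair[OF LX conjunct1[OF LY]] by (simp add: borel_prod)
  define \<gamma> where "\<gamma> = distr M (borel :: ('a \<times> 'a) measure) (\<lambda>\<omega>. (X \<omega>, Y \<omega>))"
  have fstm: "(fst :: 'a \<times> 'a \<Rightarrow> 'a) \<in> borel_measurable borel"
    by (rule borel_measurable_continuous_onI) (intro continuous_intros)
  have sndm: "(snd :: 'a \<times> 'a \<Rightarrow> 'a) \<in> borel_measurable borel"
    by (rule borel_measurable_continuous_onI) (intro continuous_intros)
  have g1: "distr \<gamma> borel fst = distr M borel X"
    unfolding \<gamma>_def using distr_distr[OF fstm pm] by (simp add: o_def)
  have g2: "distr \<gamma> borel snd = distr M borel Y'"
    unfolding \<gamma>_def using distr_distr[OF sndm pm] YY' by (simp add: o_def)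
  have gc: "\<gamma> \<in> couplings (distr M borel X) (distr M borel Y')"
  proof -
    have bp: "sets (borel :: ('a \<times> 'a) measure) = sets (borel \<Otimes>\<^sub>M (borel :: 'a measure))"
      by (metis borel_prod)
    show ?thesis
      unfolding couplings_def using g1 g2 prob_space_distr[OF pm] bp
      by (simp add: \<gamma>_def)
  qed
  define f :: "'a \<times> 'a \<Rightarrow> ereal" where "f = (\<lambda>(x, y). ereal (norm (x - y)))"
  define B where "B = min (Dseq c \<eta> K n t) (diameter C)"
  have adj2: "\<exists>j<n. \<forall>i<n. i \<noteq> j \<longrightarrow> grad (dat i) = grad (dat' i)" using adj by metis
  have pw: "norm (X \<omega> - Y \<omega>) \<le> B" if om: "\<omega> \<in> space M" for \<omega>
  proof -
    have h: "norm (X \<omega> - Y \<omega>) \<le> Dseq c \<eta> K n t \<and> X \<omega> \<in> C \<and> Y \<omega> \<in> C"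
      unfolding X_def Y_def \<psi>_def \<psi>'_def
      by (rule pointwise) (use C adj2 n eta Kpos c lip W0 om in auto)
    have "dist (X \<omega>) (Y \<omega>) \<le> diameter C"
      using diameter_bounded_bound[OF C(4)] h by blast
    then show ?thesis using h by (simp add: B_def dist_norm)
  qed
  have fm: "f \<in> borel_measurable (borel :: ('a \<times> 'a) measure)"
  proof -
    have "(\<lambda>p::'a \<times> 'a. norm (fst p - snd p)) \<in> borel_measurable borel"
      by (rule borel_measurable_continuous_onI) (intro continuous_intros)
    then have "(\<lambda>p::'a \<times> 'a. ereal (norm (fst p - snd p))) \<in> borel_measurable borel"
      by (rule borel_measurable_ereal)
    moreover have "f = (\<lambda>p::'a \<times> 'a. ereal (norm (fst p - snd p)))"
      by (auto simp: f_def)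
    ultimately show ?thesis by simp
  qed
  have fmg: "f \<in> borel_measurable \<gamma>"
    using fm by (simp add: \<gamma>_def)
  have setm: "{x \<in> space (borel :: ('a \<times> 'a) measure). f x \<le> ereal B} \<in> sets borel"
    using fm by measurable
  have ae: "AE x in \<gamma>. f x \<le> ereal B"
    unfolding \<gamma>_def using pw
    by (subst AE_distr_iff[OF pm setm]) (auto simp: f_def intro!: AE_I2)
  have "W_inf (distr M borel X) (distr M borel Y') \<le> esssup \<gamma> f"
    unfolding W_inf_def f_def[symmetric] by (rule INF_lower[OF gc])
  also have "\<dots> \<le> ereal B" by (rule esssup_I[OF fmg ae])
  finally show ?thesis by (simp add: X_def Y'_def \<psi>_def \<psi>'_def B_def)
qed

end
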